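(* Fix integers $d\geq 2$ and $n\geq d+2$. For every configuration $X=\{x_i\}_{i\in[n]}$ of $n$ points on the unit sphere $S^{d-1}\subseteq\mathbb{R}^d$, it holds that $\delta(X)\leq 1$. Furthermore, $\delta(X)=1$ if and only if $\alpha(X)=0$. Consequently, when $d+2\leq n\leq 2d$, the $n$-point softmax codes in $S^{d-1}$ are precisely the $n$-point spherical codes in $S^{d-1}$.
   Context: $[n]=\{1,\ldots,n\}$. For a configuration $X=\{x_i\}_{i\in[n]}$ in $S^{d-1}$, define $\delta(X):=\min_{j\in[n]}\operatorname{dist}(x_j,\operatorname{conv}\{x_i\}_{i\in[n]\setminus\{j\}})$ (Euclidean distance to the convex hull of the other points) and $\alpha(X):=\max_{i\neq j}\langle x_i,x_j\rangle$. An $n$-point configuration in $S^{d-1}$ is a softmax code if it maximizes $\delta$ over all $n$-point configurations in $S^{d-1}$, and a spherical code if it minimizes $\alpha$ over all $n$-point configurations in $S^{d-1}$. (It is known that for $n\ge d+2$ one always has $\alpha(X)\ge 0$, with equality achievable iff $n\le 2d$.) *)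

theory Defs
  imports "HOL-Analysis.Analysis"
begin

definition sphere_config :: "nat \<Rightarrow> (nat \<Rightarrow> real^'d) \<Rightarrow> bool" where
  "sphere_config n x \<longleftrightarrow> (\<forall>i\<in>{1..n}. norm (x i) = 1)"

definition delta :: "nat \<Rightarrow> (nat \<Rightarrow> real^'d) \<Rightarrow> real" where
  "delta n x = Min ((\<lambda>j. infdist (x j) (convex hull (x ` ({1..n} - {j})))) ` {1..n})"

definition alpha :: "nat \<Rightarrow> (nat \<Rightarrow> real^'d) \<Rightarrow> real" where
  "alpha n x = Max {x i \<bullet> x j | i j. i \<in> {1..n} \<and> j \<in> {1..n} \<and> i \<noteq> j}"

definition softmax_code :: "nat \<Rightarrow> (nat \<Rightarrow> real^'d) \<Rightarrow> bool" where
  "softmax_code n x \<longleftrightarrow> sphere_config n x \<and>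
     (\<forall>y::nat \<Rightarrow> real^'d. sphere_config n y \<longrightarrow> delta n y \<le> delta n x)"

definition spherical_code :: "nat \<Rightarrow> (nat \<Rightarrow> real^'d) \<Rightarrow> bool" where
  "spherical_code n x \<longleftrightarrow> sphere_config n x \<and>
     (\<forall>y::nat \<Rightarrow> real^'d. sphere_config n y \<longrightarrow> alpha n x \<le> alpha n y)"

end

theory Submission imports Defs begin
lemma wsum_sq:
  fixes P :: "'a::real_inner set" and q :: 'a
  assumes fin: "finite P" and u0: "\<forall>y\<in>P. 0 \<le> u y" and u1: "sum u P = 1"
    and uq: "(\<Sum>y\<in>P. u y *\<^sub>R y) = q" and nrm: "\<forall>y\<in>P. norm y = 1"
    and c: "\<forall>y\<in>P. c \<le> (norm (y - q))\<^sup>2"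
  shows "c \<le> 1 - q \<bullet> q"
proof -
  have e: "\<And>y. y \<in> P \<Longrightarrow> (norm (y - q))\<^sup>2 = 1 - 2 * (y \<bullet> q) + q \<bullet> q"
  proof -
    fix y assume "y \<in> P"
    then have "y \<bullet> y = 1" using nrm by (metis norm_eq_1)
    then show "(norm (y - q))\<^sup>2 = 1 - 2 * (y \<bullet> q) + q \<bullet> q"
      by (simp add: power2_norm_eq_inner inner_diff_left inner_diff_right inner_commute)
  qed
  have "c = (\<Sum>y\<in>P. u y * c)" using u1 by (simp add: sum_distrib_right[symmetric])
  also have "\<dots> \<le> (\<Sum>y\<in>P. u y * (1 - 2 * (y \<bullet> q) + q \<bullet> q))"
    using c u0 e by (intro sum_mono mult_left_mono) auto
  also have "\<dots> = (\<Sum>y\<in>P. u y) - 2 * (\<Sum>y\<in>P. u y * (y \<bullet> q)) + (\<Sum>y\<in>P. u y) * (q \<bullet> q)"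
    by (simp add: algebra_simps sum.distrib sum_subtractf sum_distrib_left sum_distrib_right)
  also have "(\<Sum>y\<in>P. u y * (y \<bullet> q)) = q \<bullet> q"
  proof -
    have "(\<Sum>y\<in>P. u y * (y \<bullet> q)) = (\<Sum>y\<in>P. u y *\<^sub>R y) \<bullet> q"
      by (simp add: inner_sum_left)
    then show ?thesis using uq by simp
  qed
  finally show ?thesis using u1 by simp
qed

lemma wsum_cross:
  fixes M P :: "'a::real_inner set"
  assumes "finite M" "finite P" "\<forall>y\<in>P. 0 \<le> u y" "sum u P = 1"
    "(\<Sum>y\<in>P. u y *\<^sub>R y) = q"
    "\<forall>y\<in>M. 0 \<le> v y" "sum v M = 1"
    "(\<Sum>y\<in>M. v y *\<^sub>R y) = q"
    and a: "\<forall>z\<in>M. \<forall>y\<in>P. z \<bullet> y \<le> a"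
  shows "q \<bullet> q \<le> a"
proof -
  have "q \<bullet> q = (\<Sum>z\<in>M. v z *\<^sub>R z) \<bullet> (\<Sum>y\<in>P. u y *\<^sub>R y)"
    using assms(5,8) by simp
  also have "\<dots> = (\<Sum>z\<in>M. \<Sum>y\<in>P. v z * u y * (z \<bullet> y))"
    by (simp add: inner_sum_left inner_sum_right sum_distrib_left mult.assoc mult.left_commute sum.swap[of _ P M])
  also have "\<dots> \<le> (\<Sum>z\<in>M. \<Sum>y\<in>P. v z * u y * a)"
    using assms a by (intro sum_mono mult_left_mono) auto
  also have "\<dots> = a" using assms
    by (simp add: sum_distrib_left[symmetric] sum_distrib_right[symmetric] mult.assoc)
  finally show ?thesis .
qed

lemma alpha_set_fin:
  fixes n :: nat and x :: "nat \<Rightarrow> real^'d"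
  shows   "finite {x i \<bullet> x j | i j. i \<in> {1..n} \<and> j \<in> {1..n} \<and> i \<noteq> j}"
proof -
  have "{x i \<bullet> x j | i j. i \<in> {1..n} \<and> j \<in> {1..n} \<and> i \<noteq> j}
        \<subseteq> (\<lambda>(i,j). x i \<bullet> x j) ` ({1..n} \<times> {1..n})" by auto
  moreover have "finite ((\<lambda>(i,j). x i \<bullet> x j) ` ({1..n} \<times> {1..n}))"
    by (intro finite_imageI) simp
  ultimately show ?thesis by (rule finite_subset)
qed

lemma alpha_ge:
  assumes "i \<in> {1..n}" "j \<in> {1..n}" "i \<noteq> j"
  shows "x i \<bullet> x j \<le> alpha n x"
  unfolding alpha_def using assms by (intro Max_ge[OF alpha_set_fin]) auto

lemma alpha_le:
  assumes "n \<ge> 2" "\<forall>i\<in>{1..n}. \<forall>j\<in>{1..n}. i \<noteq> j \<longrightarrow> x i \<bullet> x j \<le> a"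
  shows "alpha n x \<le> a"
proof -
  have "x 1 \<bullet> x 2 \<in> {x i \<bullet> x j | i j. i \<in> {1..n} \<and> j \<in> {1..n} \<and> i \<noteq> j}"
    using assms(1) by force
  then show ?thesis unfolding alpha_def using assms
    by (subst Max_le_iff[OF alpha_set_fin]) auto
qed

lemma delta_le:
  assumes "j \<in> {1..n}"
  shows "delta n x \<le> infdist (x j) (convex hull (x ` ({1..n} - {j})))"
  unfolding delta_def using assms by (intro Min_le) auto

lemma delta_ge:
  assumes "n \<ge> 1" "\<forall>j\<in>{1..n}. c \<le> infdist (x j) (convex hull (x ` ({1..n} - {j})))"
  shows "c \<le> delta n x"
  unfolding delta_def using assms by (subst Min_ge_iff) auto

lemma delta_nonneg:
  assumes "n \<ge> 1" shows "0 \<le> delta n x"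
  using delta_ge[OF assms, of 0 x] by (simp add: infdist_nonneg)

lemma key:
  fixes x :: "nat \<Rightarrow> real^'d"
  assumes sc: "sphere_config n x" and nd: "CARD('d) + 2 \<le> n"
  shows "delta n x \<le> 1 \<and> 0 \<le> alpha n x \<and>
    (delta n x = 1 \<longrightarrow> (\<forall>i\<in>{1..n}. \<forall>j\<in>{1..n}. i \<noteq> j \<longrightarrow> x i \<bullet> x j \<le> 0))"
proof (cases "inj_on x {1..n}")
  case False
  then obtain i j where ij: "i \<in> {1..n}" "j \<in> {1..n}" "i \<noteq> j" "x i = x j"
    unfolding inj_on_def by blast
  have "x j \<in> convex hull (x ` ({1..n} - {j}))"
    using ij by (intro hull_inc) (metis DiffI imageI singletonD)
  then have "delta n x \<le> 0" using delta_le[OF ij(2), of x] by simp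
  moreover have "x i \<bullet> x j = 1" using sc ij unfolding sphere_config_def
    by (metis norm_eq_1)
  then have "1 \<le> alpha n x" using alpha_ge[OF ij(1-3), of x] by simp
  ultimately show ?thesis by auto
next
  case True
  let ?C = "x ` {1..n}"
  have n1: "n \<ge> 1" "n \<ge> 2" using nd by auto
  have fin: "finite ?C" by simp
  have "card ?C = n" using True by (simp add: card_image)
  then have "affine_dependent ?C" using nd
    by (intro affine_dependent_biggerset) auto
  then obtain M P where MP: "M \<inter> P = {}" "M \<union> P = ?C"
    "convex hull M \<inter> convex hull P \<noteq> {}"
    using Radon_partition[OF fin] by blast
  then obtain q where q: "q \<in> convex hull M" "q \<in> convex hull P" by blast
  have finM: "finite M" and finP: "finite P" using MP(2) fin
    by (metis finite_Un)+
  obtain v where v: "\<forall>y\<in>M. 0 \<le> v y" "sum v M = 1" "(\<Sum>y\<in>M. v y *\<^sub>R y) = q"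
    using q(1) convex_hull_finite[OF finM] by auto
  obtain u where u: "\<forall>y\<in>P. 0 \<le> u y" "sum u P = 1" "(\<Sum>y\<in>P. u y *\<^sub>R y) = q"
    using q(2) convex_hull_finite[OF finP] by auto
  have nrm: "\<forall>y\<in>P. norm y = 1"
  proof
    fix y assume "y \<in> P"
    then have "y \<in> x ` {1..n}" using MP(2) by blast
    then obtain i where "i \<in> {1..n}" "y = x i" by blast
    then show "norm y = 1" using sc unfolding sphere_config_def by auto
  qed
  have qC: "q \<in> convex hull (x ` ({1..n} - {j}))" if j: "j \<in> {1..n}" for j
  proof (cases "x j \<in> M")
    case True
    then have "x j \<notin> P" using MP(1) by auto
    then have "P \<subseteq> x ` ({1..n} - {j})" using MP(2) by auto
    then show ?thesis using q(2) hull_mono by blast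
  next
    case False
    then have "M \<subseteq> x ` ({1..n} - {j})" using MP(2) by auto
    then show ?thesis using q(1) hull_mono by blast
  qed
  have dn: "0 \<le> delta n x" using delta_nonneg[OF n1(1)] .
  have "\<forall>y\<in>P. (delta n x)\<^sup>2 \<le> (norm (y - q))\<^sup>2"
  proof
    fix y assume "y \<in> P"
    then have "y \<in> x ` {1..n}" using MP(2) by blast
    then obtain j where j: "j \<in> {1..n}" "y = x j" by blast
    have "delta n x \<le> infdist (x j) (convex hull (x ` ({1..n} - {j})))"
      using delta_le[OF j(1)] .
    also have "\<dots> \<le> dist (x j) q" using infdist_le[OF qC[OF j(1)]] .
    finally show "(delta n x)\<^sup>2 \<le> (norm (y - q))\<^sup>2"
      using dn j by (simp add: dist_norm power_mono)
  qed
  then have d1: "(delta n x)\<^sup>2 \<le> 1 - q \<bullet> q"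
    using wsum_sq[OF finP u nrm] by blast
  have qq: "0 \<le> q \<bullet> q" by simp
  have D1: "delta n x \<le> 1"
  proof (rule ccontr)
    assume "\<not> ?thesis"
    then have "1 < (delta n x)\<^sup>2" by (simp add: one_less_power)
    then show False using d1 qq by linarith
  qed
  have A0: "q \<bullet> q \<le> alpha n x"
  proof (rule wsum_cross[OF finM finP u v])
    show "\<forall>z\<in>M. \<forall>y\<in>P. z \<bullet> y \<le> alpha n x"
    proof (intro ballI)
      fix z y assume zy: "z \<in> M" "y \<in> P"
      then obtain i j where "i \<in> {1..n}" "j \<in> {1..n}" "z = x i" "y = x j"
        using MP(2) by blast
      moreover have "z \<noteq> y" using zy MP(1) by auto
      ultimately show "z \<bullet> y \<le> alpha n x" using alpha_ge by blast
    qed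
  qed
  have D3: "\<forall>i\<in>{1..n}. \<forall>j\<in>{1..n}. i \<noteq> j \<longrightarrow> x i \<bullet> x j \<le> 0" if d: "delta n x = 1"
  proof (intro ballI impI)
    fix i j assume ij: "i \<in> {1..n}" "j \<in> {1..n}" "i \<noteq> j"
    have "q \<bullet> q \<le> 0" using d1 d by simp
    then have q0: "q = 0" using inner_gt_zero_iff[of q] by linarith
    show "x i \<bullet> x j \<le> 0"
    proof (rule ccontr)
      assume "\<not> ?thesis"
      then have t0: "0 < x j \<bullet> x i" by (simp add: inner_commute)
      define t where "t = x j \<bullet> x i"
      have ni: "norm (x i) = 1" and nj: "norm (x j) = 1"
        using sc ij unfolding sphere_config_def by auto
      have t1: "t \<le> 1" unfolding t_def using norm_cauchy_schwarz[of "x j" "x i"] ni nj by simp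
      let ?S = "convex hull (x ` ({1..n} - {j}))"
      have "0 \<in> ?S" using qC[OF ij(2)] q0 by simp
      moreover have "x i \<in> ?S" using ij by (intro hull_inc) auto
      ultimately have "(1 - t) *\<^sub>R 0 + t *\<^sub>R x i \<in> ?S"
        using t0 t1 unfolding t_def by (intro convexD) (auto simp: convex_convex_hull)
      then have inS: "t *\<^sub>R x i \<in> ?S" by simp
      have "(norm (x j - t *\<^sub>R x i))\<^sup>2 = 1 - t\<^sup>2"
      proof -
        have "x j \<bullet> x j = 1" "x i \<bullet> x i = 1" using ni nj by (metis norm_eq_1)+
        moreover have "(norm (x j - t *\<^sub>R x i))\<^sup>2
            = x j \<bullet> x j - 2 * t * (x j \<bullet> x i) + t * t * (x i \<bullet> x i)"
          unfolding power2_norm_eq_inner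
          by (simp add: inner_diff_left inner_diff_right inner_commute algebra_simps)
        ultimately show ?thesis unfolding t_def by (simp add: power2_eq_square)
      qed
      then have "(norm (x j - t *\<^sub>R x i))\<^sup>2 < 1" using t0 unfolding t_def by simp
      then have "norm (x j - t *\<^sub>R x i) < 1"
        using abs_square_less_1[of "norm (x j - t *\<^sub>R x i)"] by simp
      moreover have "delta n x \<le> dist (x j) (t *\<^sub>R x i)"
        using delta_le[OF ij(2)] infdist_le[OF inS] by (meson order_trans)
      ultimately show False using d by (simp add: dist_norm)
    qed
  qed
  show ?thesis using D1 order_trans[OF qq A0] D3 by blast
qed

lemma alpha0_delta:
  fixes x :: "nat \<Rightarrow> real^'d"
  assumes sc: "sphere_config n x" and nd: "CARD('d) + 2 \<le> n"
  shows "delta n x = 1 \<longleftrightarrow> alpha n x = 0"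
proof
  assume d: "delta n x = 1"
  then have "\<forall>i\<in>{1..n}. \<forall>j\<in>{1..n}. i \<noteq> j \<longrightarrow> x i \<bullet> x j \<le> 0" using key[OF sc nd] by blast
  then have "alpha n x \<le> 0" using nd by (intro alpha_le) auto
  then show "alpha n x = 0" using key[OF sc nd] by auto
next
  assume a: "alpha n x = 0"
  have n2: "n \<ge> 2" using nd by auto
  have "1 \<le> infdist (x j) (convex hull (x ` ({1..n} - {j})))" if j: "j \<in> {1..n}" for j
  proof -
    let ?S = "convex hull (x ` ({1..n} - {j}))"
    have nj: "x j \<bullet> x j = 1" using sc j unfolding sphere_config_def by (metis norm_eq_1)
    have "x ` ({1..n} - {j}) \<subseteq> {y. x j \<bullet> y \<le> 0}"
      using alpha_ge[of j n _ x] j a by auto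
    then have sub: "?S \<subseteq> {y. x j \<bullet> y \<le> 0}"
      by (intro hull_minimal) (auto simp: convex_halfspace_le)
    have ne: "?S \<noteq> {}"
    proof -
      obtain k where "k \<in> {1..n}" "k \<noteq> j" using n2 j
        by (intro that[of "if j = 1 then 2 else 1"]) auto
      then show ?thesis by auto
    qed
    have "1 \<le> dist (x j) y" if y: "y \<in> ?S" for y
    proof -
      have "x j \<bullet> y \<le> 0" using sub y by auto
      moreover have "0 \<le> y \<bullet> y" by simp
      moreover have "(norm (x j - y))\<^sup>2 = 1 - 2 * (x j \<bullet> y) + y \<bullet> y" using nj
        by (simp add: power2_norm_eq_inner inner_diff_left inner_diff_right inner_commute)
      ultimately have "1 \<le> (norm (x j - y))\<^sup>2" by linarith
      then show ?thesis using abs_square_less_1[of "norm (x j - y)"] by (auto simp: dist_norm)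
    qed
    then show ?thesis using ne by (simp add: infdist_notempty cINF_greatest)
  qed
  then have "1 \<le> delta n x" using n2 by (intro delta_ge) auto
  then show "delta n x = 1" using key[OF sc nd] by auto
qed


lemma exists_zero_alpha:
  assumes "n \<le> 2 * CARD('d::finite)"
  shows "\<exists>y::nat \<Rightarrow> real^'d. sphere_config n y \<and>
     (\<forall>i\<in>{1..n}. \<forall>j\<in>{1..n}. i \<noteq> j \<longrightarrow> y i \<bullet> y j \<le> 0)"
proof -
  define D where "D = CARD('d)"
  obtain h where h: "bij_betw h {0..<D} (UNIV::'d set)"
    using ex_bij_betw_nat_finite[of "UNIV::'d set"] unfolding D_def by auto
  have hinj: "inj_on h {0..<D}" using h bij_betw_def by blast
  define k where "k i = (if i \<le> D then i - 1 else i - D - 1)" for i :: nat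
  define s where "s i = (if i \<le> D then 1 else (-1::real))" for i :: nat
  define y where "y i = (axis (h (k i)) (s i) :: real^'d)" for i
  have ss: "s i * s i = 1" for i unfolding s_def by auto
  have "sphere_config n y" unfolding sphere_config_def y_def
    by (simp add: norm_eq_1 inner_axis_axis ss)
  moreover have "y i \<bullet> y j \<le> 0" if ij: "i \<in> {1..n}" "j \<in> {1..n}" "i \<noteq> j" for i j
  proof (cases "s i = s j")
    case True
    have "k i \<in> {0..<D}" "k j \<in> {0..<D}" using ij assms unfolding k_def D_def by auto
    moreover have "k i \<noteq> k j" using ij True unfolding k_def s_def by (auto split: if_splits)
    ultimately have "h (k i) \<noteq> h (k j)" using hinj inj_on_def by metis
    then show ?thesis unfolding y_def by (simp add: inner_axis_axis)
  next
    case False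
    then have "s i * s j = -1" unfolding s_def by (auto split: if_splits)
    then show ?thesis unfolding y_def by (simp add: inner_axis_axis)
  qed
  ultimately show ?thesis by blast
qed

theorem theorem2:
  fixes n :: nat
  assumes "CARD('d::finite) \<ge> 2"
    and "n \<ge> CARD('d) + 2"
  shows "(\<forall>x::nat \<Rightarrow> real^'d. sphere_config n x \<longrightarrow> delta n x \<le> 1)
       \<and> (\<forall>x::nat \<Rightarrow> real^'d. sphere_config n x \<longrightarrow> (delta n x = 1 \<longleftrightarrow> alpha n x = 0))
       \<and> (n \<le> 2 * CARD('d) \<longrightarrow>
            (\<forall>x::nat \<Rightarrow> real^'d. softmax_code n x \<longleftrightarrow> spherical_code n x))"
  proof -
  have P1: "\<forall>x::nat \<Rightarrow> real^'d. sphere_config n x \<longrightarrow> delta n x \<le> 1"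
    using key assms(2) by blast
  have P2: "\<forall>x::nat \<Rightarrow> real^'d. sphere_config n x \<longrightarrow> (delta n x = 1 \<longleftrightarrow> alpha n x = 0)"
    using alpha0_delta assms(2) by blast
  have A0: "\<forall>x::nat \<Rightarrow> real^'d. sphere_config n x \<longrightarrow> 0 \<le> alpha n x"
    using key assms(2) by blast
  have P3: "softmax_code n x \<longleftrightarrow> spherical_code n x"
    if le: "n \<le> 2 * CARD('d)" for x :: "nat \<Rightarrow> real^'d"
  proof -
    obtain y0 :: "nat \<Rightarrow> real^'d" where y0: "sphere_config n y0"
      "\<forall>i\<in>{1..n}. \<forall>j\<in>{1..n}. i \<noteq> j \<longrightarrow> y0 i \<bullet> y0 j \<le> 0"
      using exists_zero_alpha[OF le] by blast
    have "alpha n y0 \<le> 0" using y0(2) assms(2) by (intro alpha_le) auto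
    then have ay: "alpha n y0 = 0" using A0 y0(1) by force
    then have dy: "delta n y0 = 1" using P2 y0(1) by blast
    show ?thesis
    proof
      assume sm: "softmax_code n x"
      then have sx: "sphere_config n x" and "delta n y0 \<le> delta n x"
        using y0(1) unfolding softmax_code_def by auto
      then have "delta n x = 1" using dy P1 by force
      then have "alpha n x = 0" using P2 sx by blast
      then show "spherical_code n x" unfolding spherical_code_def using sx A0 by auto
    next
      assume sp: "spherical_code n x"
      then have sx: "sphere_config n x" and "alpha n x \<le> alpha n y0"
        using y0(1) unfolding spherical_code_def by auto
      then have "alpha n x = 0" using ay A0 by force
      then have "delta n x = 1" using P2 sx by blast
      then show "softmax_code n x" unfolding softmax_code_def using sx P1 by auto
    qed
  qed
  show ?thesis using P1 P2 P3 by blast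
qed

end
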